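(* Let $n \geq 2$ and let $G$ be a graph that has the maximum atom-bond connectivity index among all graphs with $n$ vertices and edge-connectivity $1$. Then $G \cong K_n(1)$.
   Context: All graphs are simple and undirected. For a graph $G$ and a vertex $v$, $d(v)$ denotes the degree of $v$. The atom-bond connectivity (ABC) index is ${\rm ABC}(G)=\sum_{uv\in E(G)} \sqrt{\frac{d(u)+d(v)-2}{d(u)d(v)}}$. The edge-connectivity of a graph is the minimum number of edges whose removal disconnects it. For graphs $G,H$ on disjoint vertex sets, $G+H$ is their disjoint union, and the join $G\vee H$ is the graph on $V(G)\cup V(H)$ with edge set $E(G)\cup E(H)\cup\{uv: u\in V(G), v\in V(H)\}$. $K_n(k)$ denotes the graph $K_k \vee (K_1 + K_{n-k-1})$, i.e., the graph obtained from $K_{n-1}$ by adding one new vertex joined to exactly $k$ vertices of $K_{n-1}$. *)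

theory Defs
  imports Complex_Main
begin

definition simple_graph :: "'a set \<Rightarrow> 'a set set \<Rightarrow> bool" where
  "simple_graph V E \<longleftrightarrow> finite V \<and>
     E \<subseteq> {e. \<exists>u v. e = {u, v} \<and> u \<noteq> v \<and> u \<in> V \<and> v \<in> V}"

definition degree :: "'a set set \<Rightarrow> 'a \<Rightarrow> nat" where
  "degree E v = card {e \<in> E. v \<in> e}"

definition abc_index :: "'a set set \<Rightarrow> real" where
  "abc_index E = (\<Sum>e\<in>E. sqrt (((\<Sum>v\<in>e. real (degree E v)) - 2)
                                  / (\<Prod>v\<in>e. real (degree E v))))"

definition graph_connected :: "'a set \<Rightarrow> 'a set set \<Rightarrow> bool" where
  "graph_connected V E \<longleftrightarrow>
     (\<forall>u\<in>V. \<forall>v\<in>V. (u, v) \<in> {(x, y). {x, y} \<in> E}\<^sup>*)"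

definition edge_connectivity :: "'a set \<Rightarrow> 'a set set \<Rightarrow> nat" where
  "edge_connectivity V E =
     (LEAST k. \<exists>F. F \<subseteq> E \<and> card F = k \<and> \<not> graph_connected V (E - F))"

definition graph_iso :: "'a set \<Rightarrow> 'a set set \<Rightarrow> 'b set \<Rightarrow> 'b set set \<Rightarrow> bool" where
  "graph_iso V E V' E' \<longleftrightarrow> (\<exists>f. bij_betw f V V' \<and>
     (\<forall>u\<in>V. \<forall>v\<in>V. {u, v} \<in> E \<longleftrightarrow> {f u, f v} \<in> E'))"

definition Kn_k_vertices :: "nat \<Rightarrow> nat set" where
  "Kn_k_vertices n = {0..<n}"

definition Kn_k_edges :: "nat \<Rightarrow> nat \<Rightarrow> nat set set" where
  "Kn_k_edges n k =
     {{u, v} | u v. u < v \<and> v < n - 1} \<union> {{u, n - 1} | u. u < k}"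

end

theory Submission
  imports Defs
begin


definition g :: "real \<Rightarrow> real \<Rightarrow> real" where
  "g p q = sqrt ((p + q - 2) / (p * q))"

lemma frac_anti:
  fixes p q p' q' :: real
  assumes "2 \<le> p" "p \<le> p'" "2 \<le> q" "q \<le> q'"
  shows "(p' + q' - 2) / (p' * q') \<le> (p + q - 2) / (p * q)"
proof -
  have a: "(p' + q' - 2) / (p' * q') \<le> (p + q' - 2) / (p * q')"
  proof -
    have "(p' + q' - 2) * (p * q') \<le> (p + q' - 2) * (p' * q')"
    proof -
      have "(p' + q' - 2) * p \<le> (p + q' - 2) * p'"
      proof -
        have "(q' - 2) * p \<le> (q' - 2) * p'" using assms by (intro mult_left_mono) auto
        thus ?thesis by (simp add: algebra_simps)
      qed
      hence "((p' + q' - 2) * p) * q' \<le> ((p + q' - 2) * p') * q'"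
        using assms by (intro mult_right_mono) auto
      thus ?thesis by (simp add: algebra_simps)
    qed
    thus ?thesis using assms by (simp add: divide_simps)
  qed
  have b: "(p + q' - 2) / (p * q') \<le> (p + q - 2) / (p * q)"
  proof -
    have "(q' + p - 2) * q \<le> (q + p - 2) * q'"
    proof -
      have "(p - 2) * q \<le> (p - 2) * q'" using assms by (intro mult_left_mono) auto
      thus ?thesis by (simp add: algebra_simps)
    qed
    hence "((q' + p - 2) * q) * p \<le> ((q + p - 2) * q') * p"
      using assms by (intro mult_right_mono) auto
    hence "(p + q' - 2) * (p * q) \<le> (p + q - 2) * (p * q')" by (simp add: algebra_simps)
    thus ?thesis using assms by (simp add: divide_simps)
  qed
  show ?thesis using a b by linarith
qed

lemma g_anti:
  assumes "2 \<le> p" "p \<le> p'" "2 \<le> q" "q \<le> q'"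
  shows "g p' q' \<le> g p q"
  unfolding g_def using frac_anti[OF assms] by simp

lemma g_le_half: assumes "2 \<le> p" "2 \<le> q" shows "g p q \<le> 1 / sqrt 2"
proof -
  have "g p q \<le> g 2 2" using g_anti assms by auto
  also have "g 2 2 = 1 / sqrt 2" unfolding g_def by (simp add: real_sqrt_divide)
  finally show ?thesis .
qed

lemma g_le_1: assumes "1 \<le> p" "1 \<le> q" shows "g p q \<le> 1"
proof -
  have "(p + q - 2) \<le> p * q"
  proof -
    have "0 \<le> (p - 1) * (q - 1)" using assms by simp
    thus ?thesis by (simp add: algebra_simps)
  qed
  hence "(p + q - 2) / (p * q) \<le> 1" using assms by (simp add: divide_simps)
  thus ?thesis unfolding g_def by simp
qed

lemma g_nonneg: "1 \<le> p \<Longrightarrow> 1 \<le> q \<Longrightarrow> 0 \<le> g p q"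
  unfolding g_def by simp

lemma g_sym: "g p q = g q p" unfolding g_def by (simp add: add.commute mult.commute)

lemma g_2: assumes "1 \<le> w" shows "g 2 w = 1 / sqrt 2"
  unfolding g_def using assms by (simp add: real_sqrt_divide)

lemma sqrt_diff_bound:
  fixes A B c m :: real
  assumes "0 \<le> A" "0 \<le> B" "A - B \<le> c" "0 \<le> c" "m \<le> sqrt A" "m \<le> sqrt B" "0 < m"
  shows "sqrt A - sqrt B \<le> c / (2 * m)"
proof (cases "A \<le> B")
  case True
  hence "sqrt A - sqrt B \<le> 0" by simp
  also have "0 \<le> c / (2*m)" using assms by simp
  finally show ?thesis .
next
  case False
  have e: "(sqrt A - sqrt B) * (sqrt A + sqrt B) = A - B"
    using assms by (simp add: algebra_simps)
  have pos: "sqrt A - sqrt B \<ge> 0" using False by simp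
  have "(sqrt A - sqrt B) * (2 * m) \<le> (sqrt A - sqrt B) * (sqrt A + sqrt B)"
    using pos assms by (intro mult_left_mono) auto
  also have "\<dots> \<le> c" using e assms by simp
  finally show ?thesis using assms by (simp add: divide_simps)
qed

lemma g_step:
  fixes d w :: real
  assumes "2 \<le> d" "1 \<le> w"
  shows "g d w - g (d + 1) w \<le> 1 / (2 * d * sqrt (d + 1))"
proof -
  define A where "A = (d + w - 2) / (d * w)"
  define B where "B = ((d+1) + w - 2) / ((d+1) * w)"
  have A0: "0 \<le> A" unfolding A_def using assms by simp
  have B0: "0 \<le> B" unfolding B_def using assms by simp
  have AB: "A - B = (1 - 2 / w) * (1 / (d * (d+1)))"
  proof -
    have "d \<noteq> 0" "w \<noteq> 0" "d + 1 \<noteq> 0" using assms by auto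
    thus ?thesis unfolding A_def B_def by (simp add: divide_simps) (simp add: algebra_simps)
  qed
  have AB2: "A - B \<le> 1 / (d * (d+1))"
  proof -
    have "(1 - 2 / w) \<le> 1" using assms by simp
    moreover have "0 \<le> 1 / (d * (d+1))" using assms by simp
    ultimately show ?thesis unfolding AB using mult_right_mono[of "1 - 2/w" 1 "1/(d*(d+1))"] by simp
  qed
  have mA: "1 / (d+1) \<le> A"
  proof -
    have "d * w \<le> (d + w - 2) * (d + 1)"
    proof -
      have "2 * d \<le> d * d" using assms by (intro mult_right_mono) auto
      hence "0 \<le> d * d - d + w - 2" using assms by linarith
      thus ?thesis by (simp add: algebra_simps)
    qed
    thus ?thesis unfolding A_def using assms by (simp add: divide_simps)
  qed
  have mB: "1 / (d+1) \<le> B"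
    unfolding B_def using assms by (simp add: divide_simps)
  have "sqrt A - sqrt B \<le> (1 / (d * (d+1))) / (2 * sqrt (1/(d+1)))"
    apply (rule sqrt_diff_bound[OF A0 B0 AB2])
    using assms mA mB by (auto simp: real_sqrt_le_iff)
  also have "\<dots> = 1 / (2 * d * sqrt (d + 1))"
  proof -
    have s: "sqrt (d+1) * sqrt (d+1) = d + 1" using assms by simp
    have "d * 2 + d * (d * 2) > 0" using assms by (simp add: add_pos_pos)
    thus ?thesis using assms s by (simp add: real_sqrt_divide field_simps)
  qed
  finally show ?thesis unfolding g_def A_def B_def by (simp add: add.commute add.left_commute)
qed


definition tot :: "nat \<Rightarrow> real" where
  "tot d = (if d = 1 then 1 - 1 / sqrt 2 else 1 / (2 * sqrt (real d + 1)))"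

lemma per_edge:
  assumes "1 \<le> d" "1 \<le> w"
  shows "g (real d + 1) w - g (real d) w \<ge> - (tot d / real d)"
proof (cases "d = 1")
  case True
  have "g 1 w \<le> 1" using g_le_1 assms by simp
  moreover have "g 2 w = 1 / sqrt 2" using g_2 assms by simp
  ultimately show ?thesis using True unfolding tot_def by simp
next
  case False
  hence d2: "2 \<le> real d" using assms by simp
  have "g (real d) w - g (real d + 1) w \<le> 1 / (2 * real d * sqrt (real d + 1))"
    using g_step[OF d2 assms(2)] .
  moreover have "tot d / real d = 1 / (2 * real d * sqrt (real d + 1))"
    using False unfolding tot_def by simp
  ultimately show ?thesis by linarith
qed

lemma sqrt2_bounds: "1.41 < sqrt (2::real)" "sqrt (2::real) < 1.42"
proof -
  show "1.41 < sqrt (2::real)" by (rule real_less_rsqrt) (simp add: power2_eq_square)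
  show "sqrt (2::real) < 1.42" by (rule real_less_lsqrt) (simp_all add: power2_eq_square)
qed

lemma main_ineq:
  assumes "1 \<le> dx" "1 \<le> dy"
  shows "tot dx + tot dy < g (real dx + 1) (real dy + 1)"
proof -
  have s2: "1.41 < sqrt (2::real)" "sqrt (2::real) < 1.42" using sqrt2_bounds by auto
  have inv2: "1 / sqrt 2 > (0.7::real)"
  proof -
    have "0.7 * sqrt 2 < (1::real)" using s2 by simp
    thus ?thesis using s2 by (simp add: divide_simps)
  qed
  have inv2': "1 / sqrt 2 < (0.71::real)"
  proof -
    have "(1::real) < 0.71 * sqrt 2" using s2 by simp
    thus ?thesis using s2 by (simp add: divide_simps)
  qed
  have small: "1 / (2 * sqrt (real d + 1)) \<le> 0.3" if "2 \<le> d" for d :: nat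
  proof -
    have "1.7 \<le> sqrt (real d + 1)" by (rule real_le_rsqrt) (use that in \<open>simp add: power2_eq_square\<close>)
    thus ?thesis by (simp add: divide_simps)
  qed
  show ?thesis
  proof (cases "dx = 1")
    case T1: True
    have gx: "g (real dx + 1) (real dy + 1) = 1 / sqrt 2" using T1 g_2 by simp
    show ?thesis
    proof (cases "dy = 1")
      case True
      thus ?thesis using T1 gx inv2 unfolding tot_def by simp
    next
      case False
      hence "tot dy \<le> 0.3" using small assms unfolding tot_def by simp
      thus ?thesis using T1 gx inv2 unfolding tot_def by simp
    qed
  next
    case F1: False
    show ?thesis
    proof (cases "dy = 1")
      case True
      have gy: "g (real dx + 1) (real dy + 1) = 1 / sqrt 2" using True g_2[of "real dx + 1"] g_sym
        by simp
      have "tot dx \<le> 0.3" using small assms F1 unfolding tot_def by simp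
      thus ?thesis using True gy inv2 unfolding tot_def by simp
    next
      case F2: False
      define P where "P = real dx + 1"
      define Q where "Q = real dy + 1"
      have P3: "3 \<le> P" and Q3: "3 \<le> Q" using assms F1 F2 unfolding P_def Q_def by auto
      define \<alpha> where "\<alpha> = 1 / (2 * sqrt P)"
      define \<beta> where "\<beta> = 1 / (2 * sqrt Q)"
      have tt: "tot dx + tot dy = \<alpha> + \<beta>" using F1 F2 unfolding tot_def \<alpha>_def \<beta>_def P_def Q_def by simp
      have a2: "\<alpha>^2 = 1 / (4 * P)" unfolding \<alpha>_def using P3 by (simp add: power2_eq_square divide_simps)
      have b2: "\<beta>^2 = 1 / (4 * Q)" unfolding \<beta>_def using Q3 by (simp add: power2_eq_square divide_simps)
      have "(\<alpha> + \<beta>)^2 \<le> 2 * (\<alpha>^2 + \<beta>^2)"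
      proof -
        have "0 \<le> (\<alpha> - \<beta>)^2" by simp
        thus ?thesis by (simp add: power2_eq_square algebra_simps)
      qed
      also have "\<dots> = (P + Q) / (2 * P * Q)" using P3 Q3 a2 b2 by (simp add: field_simps)
      also have "\<dots> < (P + Q - 2) / (P * Q)" using P3 Q3 by (simp add: divide_simps)
      finally have lt: "(\<alpha> + \<beta>)^2 < (P + Q - 2) / (P * Q)" .
      have ab0: "0 \<le> \<alpha> + \<beta>" unfolding \<alpha>_def \<beta>_def using P3 Q3 by simp
      have "\<alpha> + \<beta> < sqrt ((P + Q - 2) / (P * Q))"
        using lt ab0 real_less_rsqrt by blast
      thus ?thesis using tt unfolding g_def P_def Q_def by simp
    qed
  qed
qed



lemma edge_form:
  assumes "simple_graph V E" "e \<in> E"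
  obtains u v where "e = {u, v}" "u \<noteq> v" "u \<in> V" "v \<in> V"
  using assms unfolding simple_graph_def by blast

lemma finite_E: assumes "simple_graph V E" shows "finite E"
proof -
  have "E \<subseteq> Pow V" using assms unfolding simple_graph_def by blast
  moreover have "finite V" using assms unfolding simple_graph_def by blast
  ultimately show ?thesis by (meson finite_Pow_iff rev_finite_subset)
qed

definition T :: "'a set set \<Rightarrow> 'a set \<Rightarrow> real" where
  "T E e = sqrt (((\<Sum>v\<in>e. real (degree E v)) - 2) / (\<Prod>v\<in>e. real (degree E v)))"

lemma abc_T: "abc_index E = (\<Sum>e\<in>E. T E e)"
  unfolding abc_index_def T_def by simp

lemma T_pair: assumes "u \<noteq> v" shows "T E {u, v} = g (degree E u) (degree E v)"
  unfolding T_def g_def using assms by simp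

lemma T_cong: assumes "\<And>v. v \<in> e \<Longrightarrow> degree E' v = degree E v" shows "T E' e = T E e"
  unfolding T_def using assms by (simp cong: sum.cong prod.cong)

lemma degree_insert:
  assumes "finite E" "{x, y} \<notin> E"
  shows "degree (insert {x, y} E) w = degree E w + (if w = x \<or> w = y then 1 else 0)"
proof (cases "w = x \<or> w = y")
  case True
  have "{e \<in> insert {x, y} E. w \<in> e} = insert {x, y} {e \<in> E. w \<in> e}" using True by auto
  moreover have "{x,y} \<notin> {e \<in> E. w \<in> e}" using assms by simp
  ultimately show ?thesis unfolding degree_def using True assms by simp
next
  case False
  have "{e \<in> insert {x, y} E. w \<in> e} = {e \<in> E. w \<in> e}" using False by auto
  thus ?thesis unfolding degree_def using False by simp
qed

lemma degree_pos: assumes "finite E" "e \<in> E" "w \<in> e" shows "1 \<le> degree E w"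
proof -
  have "{f \<in> E. w \<in> f} \<noteq> {}" using assms by auto
  moreover have "finite {f \<in> E. w \<in> f}" using assms by simp
  ultimately show ?thesis unfolding degree_def by (simp add: Suc_le_eq card_gt_0_iff)
qed

lemma sum_star_bound:
  assumes "simple_graph V E" "x \<in> V" "{x, y} \<notin> E" "x \<noteq> y" "1 \<le> degree E x"
  shows "(\<Sum>e\<in>{e \<in> E. x \<in> e}. T (insert {x,y} E) e - T E e) \<ge> - tot (degree E x)"
proof -
  let ?E' = "insert {x,y} E"
  let ?d = "degree E x"
  have fin: "finite E" using finite_E assms by blast
  have "(\<Sum>e\<in>{e \<in> E. x \<in> e}. T ?E' e - T E e) \<ge> real (card {e \<in> E. x \<in> e}) * (- (tot ?d / real ?d))"
  proof (rule sum_bounded_below)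
    fix e assume e: "e \<in> {e \<in> E. x \<in> e}"
    then obtain p q where pq: "e = {p,q}" "p \<noteq> q" "p \<in> V" "q \<in> V" using edge_form assms by blast
    obtain w where w: "e = {x, w}" "w \<noteq> x" using pq e by auto
    have wy: "w \<noteq> y" using w e assms by auto
    have dw: "1 \<le> degree E w" using degree_pos[OF fin] e w by auto
    have "T ?E' e = g (degree ?E' x) (degree ?E' w)" using T_pair w by metis
    also have "\<dots> = g (real ?d + 1) (degree E w)" using degree_insert[OF fin assms(3)] wy w by (simp add: add.commute)
    finally have a: "T ?E' e = g (real ?d + 1) (degree E w)" .
    have b: "T E e = g (real ?d) (degree E w)" using T_pair w by metis
    show "- (tot ?d / real ?d) \<le> T ?E' e - T E e" using per_edge[OF assms(5)] dw a b by simp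
  qed
  moreover have "real (card {e \<in> E. x \<in> e}) * (- (tot ?d / real ?d)) = - tot ?d"
    using assms(5) unfolding degree_def by simp
  ultimately show ?thesis by simp
qed

lemma abc_add:
  assumes "simple_graph V E" "x \<in> V" "y \<in> V" "x \<noteq> y" "{x, y} \<notin> E"
    "1 \<le> degree E x" "1 \<le> degree E y"
  shows "abc_index E < abc_index (insert {x, y} E)"
proof -
  let ?E' = "insert {x,y} E"
  have fin: "finite E" using finite_E assms by blast
  let ?Ex = "{e \<in> E. x \<in> e}" and ?Ey = "{e \<in> E. y \<in> e}"
  define \<delta> where "\<delta> e = T ?E' e - T E e" for e
  have disj: "?Ex \<inter> ?Ey = {}"
  proof (rule ccontr)
    assume "?Ex \<inter> ?Ey \<noteq> {}"
    then obtain e where e: "e \<in> E" "x \<in> e" "y \<in> e" by blast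
    then obtain p q where "e = {p,q}" using edge_form[OF assms(1) e(1)] by metis
    hence "e = {x,y}" using e assms by auto
    thus False using e assms by simp
  qed
  have "(\<Sum>e\<in>E. \<delta> e) = (\<Sum>e\<in>?Ex \<union> ?Ey. \<delta> e)"
  proof (rule sum.mono_neutral_right)
    show "finite E" by fact
    show "?Ex \<union> ?Ey \<subseteq> E" by blast
    show "\<forall>i\<in>E - (?Ex \<union> ?Ey). \<delta> i = 0"
    proof
      fix e assume "e \<in> E - (?Ex \<union> ?Ey)"
      hence dd: "\<And>v. v \<in> e \<Longrightarrow> degree ?E' v = degree E v"
        using degree_insert[OF fin assms(5)] by auto
      show "\<delta> e = 0" unfolding \<delta>_def using T_cong[of e ?E' E, OF dd] by simp
    qed
  qed
  also have "\<dots> = (\<Sum>e\<in>?Ex. \<delta> e) + (\<Sum>e\<in>?Ey. \<delta> e)"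
    by (rule sum.union_disjoint) (use fin disj in auto)
  finally have sd: "(\<Sum>e\<in>E. \<delta> e) = (\<Sum>e\<in>?Ex. \<delta> e) + (\<Sum>e\<in>?Ey. \<delta> e)" .
  have bx: "(\<Sum>e\<in>?Ex. \<delta> e) \<ge> - tot (degree E x)"
    unfolding \<delta>_def using sum_star_bound[OF assms(1,2,5,4,6)] .
  have yx: "{y, x} = {x, y}" by blast
  have h: "(\<Sum>e\<in>?Ey. T (insert {y,x} E) e - T E e) \<ge> - tot (degree E y)"
  proof -
    have "{y,x} \<notin> E" using assms(5) yx by simp
    moreover have "y \<noteq> x" using assms(4) by simp
    ultimately show ?thesis using sum_star_bound[OF assms(1,3) _ _ assms(7)] by blast
  qed
  have by': "(\<Sum>e\<in>?Ey. \<delta> e) \<ge> - tot (degree E y)"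
    using h unfolding \<delta>_def yx .
  have "T ?E' {x,y} = g (degree ?E' x) (degree ?E' y)" using T_pair[OF assms(4)] by simp
  also have "\<dots> = g (real (degree E x) + 1) (real (degree E y) + 1)"
    using degree_insert[OF fin assms(5)] by (simp add: add.commute)
  finally have txy: "T ?E' {x,y} > tot (degree E x) + tot (degree E y)"
    using main_ineq[OF assms(6) assms(7)] by simp
  have "abc_index ?E' = T ?E' {x,y} + (\<Sum>e\<in>E. T ?E' e)"
    unfolding abc_T using fin assms(5) by simp
  also have "(\<Sum>e\<in>E. T ?E' e) = (\<Sum>e\<in>E. T E e) + (\<Sum>e\<in>E. \<delta> e)"
    unfolding \<delta>_def by (simp add: sum_subtractf)
  finally show ?thesis using sd bx by' txy unfolding abc_T by linarith
qed



definition Rel :: "'a set set \<Rightarrow> ('a \<times> 'a) set" where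
  "Rel E = {(x, y). {x, y} \<in> E}"

lemma conn_iff: "graph_connected V E \<longleftrightarrow> (\<forall>u\<in>V. \<forall>v\<in>V. (u, v) \<in> (Rel E)\<^sup>*)"
  unfolding graph_connected_def Rel_def by simp

lemma Rel_mono: "E \<subseteq> F \<Longrightarrow> (Rel E)\<^sup>* \<subseteq> (Rel F)\<^sup>*"
  unfolding Rel_def by (rule rtrancl_mono) auto

lemma Rel_sym: assumes "(a, b) \<in> (Rel E)\<^sup>*" shows "(b, a) \<in> (Rel E)\<^sup>*"
proof -
  have "sym (Rel E)" unfolding Rel_def sym_def by (auto simp: insert_commute)
  hence "sym ((Rel E)\<^sup>*)" by (rule sym_rtrancl)
  thus ?thesis using assms unfolding sym_def by blast
qed

lemma not_conn_empty:
  assumes "u \<in> V" "v \<in> V" "u \<noteq> v" shows "\<not> graph_connected V {}"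
proof
  assume "graph_connected V {}"
  hence "(u, v) \<in> (Rel {})\<^sup>*" using assms unfolding conn_iff by blast
  thus False
  proof (rule converse_rtranclE)
    assume "u = v" thus False using assms by simp
  next
    fix z assume "(u, z) \<in> Rel {}" thus False unfolding Rel_def by simp
  qed
qed

lemma two_elems: assumes "2 \<le> card V" obtains u v where "u \<in> V" "v \<in> V" "u \<noteq> v"
proof -
  have c0: "card V \<noteq> 0" using assms by simp
  hence fin: "finite V" and ne: "V \<noteq> {}" by (auto simp: card_eq_0_iff)
  obtain u where u: "u \<in> V" using ne by blast
  have "card (V - {u}) = card V - 1" using u fin by (simp add: card_Diff_singleton)
  hence "card (V - {u}) \<noteq> 0" using assms by linarith
  hence "V - {u} \<noteq> {}" by (metis card.empty)
  then obtain v where "v \<in> V - {u}" by blast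
  thus ?thesis using that u by blast
qed

lemma ec1_D:
  assumes "simple_graph V E" "2 \<le> card V" "edge_connectivity V E = 1"
  shows "graph_connected V E" "\<exists>e\<in>E. \<not> graph_connected V (E - {e})"
proof -
  define P where "P k = (\<exists>F. F \<subseteq> E \<and> card F = k \<and> \<not> graph_connected V (E - F))" for k
  have ec: "edge_connectivity V E = (LEAST k. P k)" unfolding edge_connectivity_def P_def by simp
  obtain u v where uv: "u \<in> V" "v \<in> V" "u \<noteq> v" using two_elems assms by blast
  have "P (card E)" unfolding P_def using not_conn_empty[OF uv] by (intro exI[of _ E]) simp
  hence "P (LEAST k. P k)" by (rule LeastI)
  hence P1: "P 1" using ec assms(3) by simp
  have "0 < (LEAST k. P k)" using ec assms(3) by simp
  hence "\<not> P 0" by (rule not_less_Least)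
  hence "\<not> (({}::'a set set) \<subseteq> E \<and> card ({}::'a set set) = 0 \<and> \<not> graph_connected V (E - {}))"
    unfolding P_def by blast
  thus "graph_connected V E" by simp
  from P1 obtain F where F: "F \<subseteq> E" "card F = 1" "\<not> graph_connected V (E - F)"
    unfolding P_def by blast
  then obtain e where "F = {e}" by (meson card_1_singletonE)
  thus "\<exists>e\<in>E. \<not> graph_connected V (E - {e})" using F by blast
qed

lemma ec1_I:
  assumes "simple_graph V E" "graph_connected V E" "e \<in> E" "\<not> graph_connected V (E - {e})"
  shows "edge_connectivity V E = 1"
  unfolding edge_connectivity_def
proof (rule Least_equality)
  show "\<exists>F\<subseteq>E. card F = 1 \<and> \<not> graph_connected V (E - F)"
    using assms by (intro exI[of _ "{e}"]) auto
  fix k assume "\<exists>F\<subseteq>E. card F = k \<and> \<not> graph_connected V (E - F)"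
  then obtain F where F: "F \<subseteq> E" "card F = k" "\<not> graph_connected V (E - F)" by blast
  have "finite F" using F finite_E[OF assms(1)] finite_subset by blast
  show "1 \<le> k"
  proof (rule ccontr)
    assume "\<not> 1 \<le> k"
    hence "card F = 0" using F by simp
    hence "F = {}" using \<open>finite F\<close> by (simp add: card_eq_0_iff)
    thus False using F assms by simp
  qed
qed

lemma deg_pos_conn:
  assumes "simple_graph V E" "2 \<le> card V" "graph_connected V E" "x \<in> V"
  shows "1 \<le> degree E x"
proof -
  obtain u v where uv: "u \<in> V" "v \<in> V" "u \<noteq> v" using two_elems assms by blast
  obtain y where y: "y \<in> V" "y \<noteq> x" using uv by blast
  have xy: "(x, y) \<in> (Rel E)\<^sup>*" using assms y unfolding conn_iff by blast
  obtain z where "(x, z) \<in> Rel E"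
    by (rule converse_rtranclE[OF xy]) (use y in auto)
  hence "{x, z} \<in> E" unfolding Rel_def by simp
  thus ?thesis using degree_pos[OF finite_E[OF assms(1)]] by blast
qed

lemma component:
  assumes "simple_graph V E" "graph_connected V E" "e \<in> E" "\<not> graph_connected V (E - {e})"
  obtains A u v where "A \<subseteq> V" "u \<in> A" "v \<in> V" "v \<notin> A" "e = {u, v}"
    "\<And>p q. {p, q} \<in> E - {e} \<Longrightarrow> p \<in> A \<longleftrightarrow> q \<in> A"
    "\<And>x y. x \<in> V \<Longrightarrow> y \<in> V \<Longrightarrow> (x \<in> A \<longleftrightarrow> y \<in> A) \<Longrightarrow>
        \<not> graph_connected V (insert {x, y} E - {e})"
proof -
  obtain w1 w2 where w: "w1 \<in> V" "w2 \<in> V" "(w1, w2) \<notin> (Rel (E - {e}))\<^sup>*"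
    using assms(4) unfolding conn_iff by blast
  define A where "A = {w \<in> V. (w1, w) \<in> (Rel (E - {e}))\<^sup>*}"
  have AV: "A \<subseteq> V" unfolding A_def by blast
  have w1A: "w1 \<in> A" unfolding A_def using w by simp
  have w2A: "w2 \<notin> A" unfolding A_def using w by simp
  have cl1: "q \<in> A" if pq: "{p, q} \<in> E - {e}" and pA: "p \<in> A" for p q
  proof -
    have "{p, q} \<in> E" using pq by simp
    then obtain a b where ab: "{p,q} = {a,b}" "a \<in> V" "b \<in> V" by (rule edge_form[OF assms(1)])
    have "q \<in> {a, b}" using ab(1) by blast
    hence qV: "q \<in> V" using ab by blast
    have r: "(p, q) \<in> Rel (E - {e})" unfolding Rel_def using pq by simp
    have "(w1, p) \<in> (Rel (E - {e}))\<^sup>*" using pA unfolding A_def by simp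
    hence "(w1, q) \<in> (Rel (E - {e}))\<^sup>*" using r by (rule rtrancl_into_rtrancl)
    thus ?thesis unfolding A_def using qV by simp
  qed
  have cl: "p \<in> A \<longleftrightarrow> q \<in> A" if "{p, q} \<in> E - {e}" for p q
  proof -
    have "{q, p} \<in> E - {e}" using that by (simp add: insert_commute)
    thus ?thesis using cl1[of p q] cl1[of q p] that by blast
  qed
  have stay: "b \<in> A" if F: "F \<subseteq> insert {x, y} (E - {e})" and xy: "x \<in> A \<longleftrightarrow> y \<in> A"
     and r: "(w1, b) \<in> (Rel F)\<^sup>*" for F x y b
    using r
  proof (induction rule: rtrancl_induct)
    case base thus ?case using w1A .
  next
    case (step b c)
    hence bc: "{b, c} \<in> F" unfolding Rel_def by simp
    show ?case
    proof (cases "{b, c} = {x, y}")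
      case True
      hence "(b = x \<and> c = y) \<or> (b = y \<and> c = x)" by (metis doubleton_eq_iff)
      thus ?thesis using step.IH xy by blast
    next
      case False
      hence "{b, c} \<in> E - {e}" using bc F by blast
      thus ?thesis using cl[of b c] step.IH by blast
    qed
  qed
  have stay2: "\<not> graph_connected V (insert {x, y} E - {e})"
    if "x \<in> A \<longleftrightarrow> y \<in> A" for x y
  proof
    assume "graph_connected V (insert {x, y} E - {e})"
    hence r: "(w1, w2) \<in> (Rel (insert {x, y} E - {e}))\<^sup>*" using w unfolding conn_iff by blast
    have sub: "insert {x, y} E - {e} \<subseteq> insert {x, y} (E - {e})" by blast
    have "w2 \<in> A" by (rule stay[OF sub that r])
    thus False using w2A by simp
  qed
  obtain p q where pq: "e = {p, q}" "p \<noteq> q" "p \<in> V" "q \<in> V" by (rule edge_form[OF assms(1,3)])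
  have cross: "\<not> (p \<in> A \<longleftrightarrow> q \<in> A)"
  proof
    assume h: "p \<in> A \<longleftrightarrow> q \<in> A"
    have r: "(w1, w2) \<in> (Rel E)\<^sup>*" using w assms(2) unfolding conn_iff by blast
    have sub: "E \<subseteq> insert {p, q} (E - {e})" using pq by blast
    have "w2 \<in> A" by (rule stay[OF sub h r])
    thus False using w2A by simp
  qed
  show ?thesis
  proof (cases "p \<in> A")
    case True
    hence qA: "q \<notin> A" using cross by blast
    show ?thesis
    proof (rule that[of A p q])
      show "A \<subseteq> V" by (fact AV)
      show "p \<in> A" by (fact True)
      show "q \<in> V" by (fact pq(4))
      show "q \<notin> A" by (fact qA)
      show "e = {p, q}" by (fact pq(1))
      show "\<And>p q. {p, q} \<in> E - {e} \<Longrightarrow> p \<in> A \<longleftrightarrow> q \<in> A" by (rule cl)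
      show "\<And>x y. x \<in> V \<Longrightarrow> y \<in> V \<Longrightarrow> (x \<in> A \<longleftrightarrow> y \<in> A) \<Longrightarrow>
        \<not> graph_connected V (insert {x, y} E - {e})" by (rule stay2)
    qed
  next
    case False
    hence qA: "q \<in> A" using cross by blast
    show ?thesis
    proof (rule that[of A q p])
      show "A \<subseteq> V" by (fact AV)
      show "q \<in> A" by (fact qA)
      show "p \<in> V" by (fact pq(3))
      show "p \<notin> A" by (fact False)
      show "e = {q, p}" using pq(1) by (simp add: insert_commute)
      show "\<And>p q. {p, q} \<in> E - {e} \<Longrightarrow> p \<in> A \<longleftrightarrow> q \<in> A" by (rule cl)
      show "\<And>x y. x \<in> V \<Longrightarrow> y \<in> V \<Longrightarrow> (x \<in> A \<longleftrightarrow> y \<in> A) \<Longrightarrow>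
        \<not> graph_connected V (insert {x, y} E - {e})" by (rule stay2)
    qed
  qed
qed



lemma Kn_raw: "S \<in> Kn_k_edges n 1 \<longleftrightarrow> (\<exists>i j. S = {i, j} \<and> i < j \<and> j < n - 1) \<or> S = {0, n - 1}"
  unfolding Kn_k_edges_def by auto

lemma Kn1_mem:
  assumes "2 \<le> n" "a < n" "b < n"
  shows "{a, b} \<in> Kn_k_edges n 1 \<longleftrightarrow> a \<noteq> b \<and> ((a < n - 1 \<and> b < n - 1) \<or> {a, b} = {0, n - 1})"
proof
  assume "{a, b} \<in> Kn_k_edges n 1"
  hence "(\<exists>i j. {a, b} = {i, j} \<and> i < j \<and> j < n - 1) \<or> {a, b} = {0, n - 1}" by (simp only: Kn_raw)
  thus "a \<noteq> b \<and> ((a < n - 1 \<and> b < n - 1) \<or> {a, b} = {0, n - 1})"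
  proof
    assume "\<exists>i j. {a, b} = {i, j} \<and> i < j \<and> j < n - 1"
    then obtain i j where c: "{a, b} = {i, j}" "i < j" "j < n - 1" by blast
    hence "(a = i \<and> b = j) \<or> (a = j \<and> b = i)" by (simp add: doubleton_eq_iff)
    hence "a \<noteq> b \<and> a < n - 1 \<and> b < n - 1" using c(2) c(3) by auto
    thus ?thesis by blast
  next
    assume ab: "{a, b} = {0, n - 1}"
    hence "(a = 0 \<and> b = n - 1) \<or> (a = n - 1 \<and> b = 0)" by (simp add: doubleton_eq_iff)
    hence "a \<noteq> b" using assms(1) by auto
    thus ?thesis using ab by blast
  qed
next
  assume h: "a \<noteq> b \<and> ((a < n - 1 \<and> b < n - 1) \<or> {a, b} = {0, n - 1})"
  show "{a, b} \<in> Kn_k_edges n 1"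
  proof (cases "a < n - 1 \<and> b < n - 1")
    case T: True
    show ?thesis
    proof (cases "a < b")
      case True
      have "\<exists>i j. {a, b} = {i, j} \<and> i < j \<and> j < n - 1"
        by (intro exI[of _ a] exI[of _ b]) (use True T in simp)
      thus ?thesis unfolding Kn_raw by (rule disjI1)
    next
      case False
      hence ba: "b < a" using h by simp
      have "\<exists>i j. {a, b} = {i, j} \<and> i < j \<and> j < n - 1"
        by (intro exI[of _ b] exI[of _ a]) (use ba T in \<open>simp add: insert_commute\<close>)
      thus ?thesis unfolding Kn_raw by (rule disjI1)
    qed
  next
    case False
    have "(a < n - 1 \<and> b < n - 1) \<or> {a, b} = {0, n - 1}" using h by (rule conjunct2)
    hence "{a, b} = {0, n - 1}" using False by (elim disjE) simp_all
    thus ?thesis unfolding Kn_raw by (rule disjI2)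
  qed
qed

lemma iso_star:
  assumes "card V = n" "2 \<le> n" "u \<in> V" "v \<in> V" "u \<noteq> v"
    and E: "\<And>p q. p \<in> V \<Longrightarrow> q \<in> V \<Longrightarrow>
        {p, q} \<in> E \<longleftrightarrow> p \<noteq> q \<and> ((p \<noteq> u \<and> q \<noteq> u) \<or> {p, q} = {u, v})"
  shows "graph_iso V E (Kn_k_vertices n) (Kn_k_edges n 1)"
proof -
  have finV: "finite V" using assms by (metis card.infinite not_numeral_le_zero)
  define W where "W = V - {u, v}"
  have cW: "card W = n - 2" unfolding W_def using assms finV by (simp add: card_Diff_subset)
  have "card {1..<n-1} = n - 2" by simp
  then obtain h where h: "bij_betw h W {1..<n-1}"
    using finite_same_card_bij[of W "{1..<n-1}"] cW finV unfolding W_def by auto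
  define f where "f w = (if w = u then n - 1 else if w = v then 0 else h w)" for w
  have hW: "h w \<in> {1..<n-1}" if "w \<in> W" for w using h that bij_betwE by blast
  have fu: "f u = n - 1" unfolding f_def by simp
  have fv: "f v = 0" unfolding f_def using assms by simp
  have fW: "f w = h w" if "w \<in> W" for w using that unfolding f_def W_def by auto
  have f_lt: "f p < n" if "p \<in> V" for p
  proof -
    have "p = u \<or> p = v \<or> p \<in> W" using that unfolding W_def by blast
    thus ?thesis using fu fv fW hW assms(2) by fastforce
  qed
  have f_top: "f p = n - 1 \<longleftrightarrow> p = u" if "p \<in> V" for p
  proof -
    have "p = u \<or> p = v \<or> p \<in> W" using that unfolding W_def by blast
    thus ?thesis using fu fv fW hW assms(2) assms(5) unfolding W_def by fastforce
  qed
  have f_bot: "f p = 0 \<longleftrightarrow> p = v" if "p \<in> V" for p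
  proof -
    have "p = u \<or> p = v \<or> p \<in> W" using that unfolding W_def by blast
    thus ?thesis using fu fv fW hW assms(2) assms(5) unfolding W_def by fastforce
  qed
  have inj: "inj_on f V"
  proof (rule inj_onI)
    fix p q assume pq: "p \<in> V" "q \<in> V" "f p = f q"
    show "p = q"
    proof (cases "p \<in> W \<and> q \<in> W")
      case True
      hence "h p = h q" using pq fW by simp
      thus ?thesis using True h unfolding bij_betw_def inj_on_def by blast
    next
      case False
      hence "p = u \<or> p = v \<or> q = u \<or> q = v" unfolding W_def using pq by blast
      thus ?thesis using f_top f_bot pq by metis
    qed
  qed
  have img: "f ` V = {0..<n}"
  proof
    show "f ` V \<subseteq> {0..<n}" using f_lt by auto
    show "{0..<n} \<subseteq> f ` V"
    proof
      fix i assume i: "i \<in> {0..<n}"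
      show "i \<in> f ` V"
      proof (cases "i = n - 1")
        case True
        have "f u \<in> f ` V" using assms(3) by (rule imageI)
        thus ?thesis using True fu by simp
      next
        case F1: False
        show ?thesis
        proof (cases "i = 0")
          case True
          have "f v \<in> f ` V" using assms(4) by (rule imageI)
          thus ?thesis using True fv by simp
        next
          case False
          hence "i \<in> {1..<n-1}" using i F1 by auto
          hence "i \<in> h ` W" using h by (simp add: bij_betw_def)
          then obtain w where w: "w \<in> W" "i = h w" by (rule imageE)
          have "w \<in> V" using w(1) unfolding W_def by blast
          hence "f w \<in> f ` V" by (rule imageI)
          thus ?thesis using fW[OF w(1)] w(2) by simp
        qed
      qed
    qed
  qed
  have bij: "bij_betw f V (Kn_k_vertices n)"
    unfolding bij_betw_def Kn_k_vertices_def using inj img by simp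
  have edges: "{p, q} \<in> E \<longleftrightarrow> {f p, f q} \<in> Kn_k_edges n 1" if pq: "p \<in> V" "q \<in> V" for p q
  proof -
    have "{f p, f q} \<in> Kn_k_edges n 1 \<longleftrightarrow>
        f p \<noteq> f q \<and> ((f p < n - 1 \<and> f q < n - 1) \<or> {f p, f q} = {0, n - 1})"
      using Kn1_mem[OF assms(2) f_lt[OF pq(1)] f_lt[OF pq(2)]] .
    moreover have "f p \<noteq> f q \<longleftrightarrow> p \<noteq> q" using inj_on_eq_iff[OF inj pq] by simp
    moreover have "f p < n - 1 \<longleftrightarrow> p \<noteq> u" using f_lt[OF pq(1)] f_top[OF pq(1)] by auto
    moreover have "f q < n - 1 \<longleftrightarrow> q \<noteq> u" using f_lt[OF pq(2)] f_top[OF pq(2)] by auto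
    moreover have "{f p, f q} = {0, n - 1} \<longleftrightarrow> {p, q} = {u, v}"
    proof -
      have "{f p, f q} = {0, n - 1} \<longleftrightarrow> (f p = 0 \<and> f q = n - 1) \<or> (f p = n - 1 \<and> f q = 0)"
        by (rule doubleton_eq_iff)
      also have "\<dots> \<longleftrightarrow> (p = v \<and> q = u) \<or> (p = u \<and> q = v)"
        using f_top f_bot pq by simp
      also have "\<dots> \<longleftrightarrow> {p, q} = {u, v}" unfolding doubleton_eq_iff by blast
      finally show ?thesis .
    qed
    ultimately show ?thesis using E[OF pq] by simp
  qed
  show ?thesis unfolding graph_iso_def
    by (rule exI[of _ f], rule conjI[OF bij]) (use edges in blast)
qed



definition side :: "nat \<Rightarrow> real" where
  "side s = (if s = 2 then 1 else real s * sqrt (2 * (real s - 2)) / 2)"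

lemma tangent: assumes "0 \<le> x" "0 < y" shows "sqrt x \<le> (x + y) / (2 * sqrt y)"
proof -
  have "0 \<le> (sqrt x - sqrt y)^2" by simp
  hence "2 * sqrt x * sqrt y \<le> x + y" using assms by (simp add: power2_eq_square algebra_simps)
  moreover have "0 < sqrt y" using assms by simp
  ultimately show ?thesis by (simp add: divide_simps mult.commute mult.left_commute)
qed

lemma gap: assumes "3 \<le> b" shows "sqrt 2 < b * sqrt b - b * sqrt (b - 2)"
proof -
  have "b * sqrt (b - 2) \<le> (b - 1) * sqrt b"
  proof -
    have "b * sqrt (b - 2) = sqrt (b^2 * (b - 2))" using assms by (simp add: real_sqrt_mult)
    also have "\<dots> \<le> sqrt ((b - 1)^2 * b)"
    proof -
      have "b^2 * (b - 2) \<le> (b - 1)^2 * b" using assms by (simp add: power2_eq_square algebra_simps)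
      thus ?thesis by simp
    qed
    also have "\<dots> = (b - 1) * sqrt b" using assms by (simp add: real_sqrt_mult)
    finally show ?thesis .
  qed
  hence "sqrt b \<le> b * sqrt b - b * sqrt (b - 2)" by (simp add: algebra_simps)
  moreover have "sqrt 2 < sqrt b" using assms by simp
  ultimately show ?thesis by linarith
qed

lemma final_ineq:
  fixes a b :: nat
  assumes "2 \<le> a" "2 \<le> b"
  shows "side a + side b + 1 / sqrt 2 <
    real (a + b - 2) * sqrt (2 * real (a + b - 2)) / 2 + g 1 (real (a + b) - 1)"
proof -
  define c where "c = sqrt (2::real)"
  have c0: "0 < c" unfolding c_def by simp
  have cc: "c * c = 2" unfolding c_def by simp
  have half: "1 / sqrt 2 = c / 2" unfolding c_def by (simp add: divide_simps)
  have sq2: "sqrt (2 * t) = c * sqrt t" for t unfolding c_def by (simp add: real_sqrt_mult)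
  define n where "n = a + b"
  have n4: "4 \<le> n" unfolding n_def using assms by simp
  have nr: "real (a + b - 2) = real n - 2" unfolding n_def using assms by simp
  define R where "R = g 1 (real n - 1)"
  have R: "c / 2 < R"
  proof -
    have "R = sqrt ((real n - 2) / (real n - 1))" unfolding R_def g_def using n4 by simp
    moreover have "1 / 2 < (real n - 2) / (real n - 1)" using n4 by (simp add: divide_simps)
    hence "sqrt (1/2) < sqrt ((real n - 2) / (real n - 1))" by simp
    moreover have "sqrt (1/2) = c / 2" unfolding c_def by (simp add: real_sqrt_divide divide_simps)
    ultimately show ?thesis by simp
  qed
  have sideQ: "side s = c / 2 * real s * sqrt (real s - 2)" if "3 \<le> s" for s
  proof -
    have e: "side s = real s * sqrt (2 * (real s - 2)) / 2" unfolding side_def using that by simp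
    show ?thesis unfolding e sq2 by simp
  qed
  have RHS: "real (a + b - 2) * sqrt (2 * real (a + b - 2)) / 2 + g 1 (real (a + b) - 1)
      = c / 2 * ((real n - 2) * sqrt (real n - 2)) + R"
  proof -
    have "real (a + b - 2) * sqrt (2 * real (a + b - 2)) / 2 = c / 2 * ((real n - 2) * sqrt (real n - 2))"
      unfolding nr sq2 by simp
    moreover have "g 1 (real (a + b) - 1) = R" unfolding R_def n_def by simp
    ultimately show ?thesis by simp
  qed
  have key: "side a + side b + c / 2 < c / 2 * ((real n - 2) * sqrt (real n - 2)) + R"
  proof (cases "a = 2")
    case A2: True
    show ?thesis
    proof (cases "b = 2")
      case True
      hence "n = 4" using A2 unfolding n_def by simp
      hence "c / 2 * ((real n - 2) * sqrt (real n - 2)) = c / 2 * (2 * c)" unfolding c_def by simp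
      also have "\<dots> = 2" using cc by simp
      finally show ?thesis using R A2 True unfolding side_def by simp
    next
      case False
      hence b3: "3 \<le> b" using assms by simp
      have nb: "real n - 2 = real b" unfolding n_def using A2 by simp
      have "c < real b * sqrt (real b) - real b * sqrt (real b - 2)"
        using gap[of "real b"] b3 unfolding c_def by simp
      hence "c / 2 * c < c / 2 * (real b * sqrt (real b) - real b * sqrt (real b - 2))"
        using c0 by simp
      hence "1 < c / 2 * (real b * sqrt (real b) - real b * sqrt (real b - 2))"
        using cc by simp
      thus ?thesis using R A2 sideQ[OF b3] unfolding nb side_def by (simp add: algebra_simps)
    qed
  next
    case A3: False
    hence a3: "3 \<le> a" using assms by simp
    show ?thesis
    proof (cases "b = 2")
      case True
      have na: "real n - 2 = real a" unfolding n_def using True by simp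
      have "c < real a * sqrt (real a) - real a * sqrt (real a - 2)"
        using gap[of "real a"] a3 unfolding c_def by simp
      hence "c / 2 * c < c / 2 * (real a * sqrt (real a) - real a * sqrt (real a - 2))"
        using c0 by simp
      hence "1 < c / 2 * (real a * sqrt (real a) - real a * sqrt (real a - 2))"
        using cc by simp
      thus ?thesis using R True sideQ[OF a3] unfolding na side_def by (simp add: algebra_simps)
    next
      case False
      hence b3: "3 \<le> b" using assms by simp
      define y where "y = real n - 2"
      have y0: "0 < y" unfolding y_def using n4 by simp
      have sy: "sqrt y * sqrt y = y" using y0 by simp
      have ta: "sqrt (real a - 2) \<le> (real a - 2 + y) / (2 * sqrt y)"
        using tangent[of "real a - 2" y] a3 y0 by simp
      have tb: "sqrt (real b - 2) \<le> (real b - 2 + y) / (2 * sqrt y)"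
        using tangent[of "real b - 2" y] b3 y0 by simp
      have "real a * sqrt (real a - 2) + real b * sqrt (real b - 2)
          \<le> real a * ((real a - 2 + y) / (2 * sqrt y)) + real b * ((real b - 2 + y) / (2 * sqrt y))"
        using ta tb by (intro add_mono mult_left_mono) auto
      also have "\<dots> = (real a * (real a - 2 + y) + real b * (real b - 2 + y)) / (2 * sqrt y)"
        using y0 by (simp add: field_simps)
      also have "\<dots> \<le> y * sqrt y"
      proof -
        have "real a * (real a - 2 + y) + real b * (real b - 2 + y) \<le> 2 * y * y"
        proof -
          have "0 \<le> 2 * (real a - 2) * (real b - 2)" using a3 b3 by simp
          thus ?thesis unfolding y_def n_def by (simp add: algebra_simps power2_eq_square)
        qed
        also have "\<dots> = y * sqrt y * (2 * sqrt y)" using sy by (simp add: algebra_simps)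
        finally show ?thesis using y0 by (simp add: divide_simps)
      qed
      finally have S: "real a * sqrt (real a - 2) + real b * sqrt (real b - 2) \<le> y * sqrt y" .
      have "side a + side b = c / 2 * (real a * sqrt (real a - 2) + real b * sqrt (real b - 2))"
        using sideQ[OF a3] sideQ[OF b3] by (simp add: algebra_simps)
      also have "\<dots> \<le> c / 2 * (y * sqrt y)" using S c0 by simp
      finally show ?thesis using R unfolding y_def by linarith
    qed
  qed
  show ?thesis using key RHS half by simp
qed



lemma choose2_real: "real (s choose 2) = real s * (real s - 1) / 2"
proof (induction s)
  case 0 thus ?case by simp
next
  case (Suc s)
  have "Suc s choose 2 = s + (s choose 2)"
    by (simp add: numeral_2_eq_2)
  hence "real (Suc s choose 2) = real s + real (s choose 2)" by simp
  also have "\<dots> = real (Suc s) * (real (Suc s) - 1) / 2" using Suc by (simp add: field_simps)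
  finally show ?case .
qed

lemma g_diag: assumes "1 \<le> x" shows "g x x = sqrt (2 * (x - 1)) / x"
proof -
  have "(x + x - 2) / (x * x) = (2 * (x - 1)) / x^2" by (simp add: power2_eq_square algebra_simps)
  hence "g x x = sqrt (2 * (x - 1)) / sqrt (x^2)" unfolding g_def by (simp add: real_sqrt_divide)
  thus ?thesis using assms by simp
qed

lemma choose_g: assumes "2 \<le> s"
  shows "real (s choose 2) * g (real s - 1) (real s - 1) = real s * sqrt (2 * (real s - 2)) / 2"
proof -
  have s1: "1 < real s - 1 \<or> real s - 1 = 1" using assms by linarith
  have "g (real s - 1) (real s - 1) = sqrt (2 * (real s - 2)) / (real s - 1)"
    using g_diag[of "real s - 1"] assms by (simp add: algebra_simps)
  moreover have "real s - 1 \<noteq> 0" using assms by simp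
  ultimately show ?thesis unfolding choose2_real by (simp add: field_simps)
qed

lemma deg_lower:
  assumes "finite E" "finite S" "p \<notin> S" "\<And>q. q \<in> S \<Longrightarrow> {p, q} \<in> E"
  shows "card S \<le> degree E p"
proof -
  have inj: "inj_on (\<lambda>q. {p, q}) S"
  proof (rule inj_onI)
    fix q1 q2 assume q: "q1 \<in> S" "q2 \<in> S" "{p, q1} = {p, q2}"
    hence "(p = p \<and> q1 = q2) \<or> (p = q2 \<and> q1 = p)" by (simp add: doubleton_eq_iff)
    thus "q1 = q2" using q(2) assms(3) by blast
  qed
  have sub: "(\<lambda>q. {p, q}) ` S \<subseteq> {e \<in> E. p \<in> e}" using assms(4) by blast
  have "card S = card ((\<lambda>q. {p, q}) ` S)" using card_image[OF inj] by simp
  also have "\<dots> \<le> card {e \<in> E. p \<in> e}" using sub assms(1) by (intro card_mono) auto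
  finally show ?thesis unfolding degree_def .
qed

lemma deg_upper:
  assumes "simple_graph V E" "p \<in> V"
  shows "degree E p \<le> card V - 1"
proof -
  have finV: "finite V" using assms unfolding simple_graph_def by blast
  have sub: "{e \<in> E. p \<in> e} \<subseteq> (\<lambda>q. {p, q}) ` (V - {p})"
  proof
    fix e assume e: "e \<in> {e \<in> E. p \<in> e}"
    then obtain a b where ab: "e = {a, b}" "a \<noteq> b" "a \<in> V" "b \<in> V"
      using edge_form[OF assms(1)] by blast
    show "e \<in> (\<lambda>q. {p, q}) ` (V - {p})"
    proof (cases "p = a")
      case True
      hence "e = {p, b}" "b \<in> V - {p}" using ab by auto
      thus ?thesis by blast
    next
      case False
      hence pb: "p = b" using e ab by auto
      hence "e = {p, a}" using ab by (simp add: insert_commute)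
      moreover have "a \<in> V - {p}" using ab pb by auto
      ultimately show ?thesis by blast
    qed
  qed
  have "degree E p \<le> card ((\<lambda>q. {p, q}) ` (V - {p}))"
    unfolding degree_def using sub finV by (intro card_mono) auto
  also have "\<dots> \<le> card (V - {p})" using finV by (intro card_image_le) auto
  also have "\<dots> = card V - 1" using assms(2) finV by simp
  finally show ?thesis .
qed

lemma side_sum:
  assumes "simple_graph V E" "A \<subseteq> V" "card A = s" "2 \<le> s"
    and cl: "\<And>p q. p \<in> A \<Longrightarrow> q \<in> A \<Longrightarrow> p \<noteq> q \<Longrightarrow> {p, q} \<in> E"
  shows "(\<Sum>e\<in>{e \<in> E. e \<subseteq> A}. T E e) \<le> side s"
proof -
  have finE: "finite E" using finite_E[OF assms(1)] .
  have finA: "finite A" using assms(3,4) by (metis card.infinite not_numeral_le_zero)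
  define Bd where "Bd = (if s = 2 then 1 else g (real s - 1) (real s - 1))"
  have Bd0: "0 \<le> Bd" unfolding Bd_def using assms(4) g_nonneg[of "real s - 1" "real s - 1"] by auto
  have degA: "real s - 1 \<le> real (degree E p)" if "p \<in> A" for p
  proof -
    have "card (A - {p}) \<le> degree E p"
      by (rule deg_lower[OF finE]) (use finA that cl in auto)
    moreover have "card (A - {p}) = s - 1" using that finA assms(3) by simp
    ultimately show ?thesis using assms(4) by linarith
  qed
  have each: "T E e \<le> Bd" if "e \<in> {e \<in> E. e \<subseteq> A}" for e
  proof -
    have eE: "e \<in> E" and eA: "e \<subseteq> A" using that by auto
    obtain p q where pq: "e = {p, q}" "p \<noteq> q" using edge_form[OF assms(1) eE] by metis
    have pA: "p \<in> A" and qA: "q \<in> A" using eA pq by auto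
    have Te: "T E e = g (degree E p) (degree E q)" using T_pair[OF pq(2)] pq(1) by simp
    show ?thesis
    proof (cases "s = 2")
      case True
      have "1 \<le> real (degree E p)" "1 \<le> real (degree E q)" using degA[OF pA] degA[OF qA] True by auto
      thus ?thesis unfolding Te Bd_def using True g_le_1 by simp
    next
      case False
      hence "2 \<le> real s - 1" using assms(4) by simp
      hence "g (degree E p) (degree E q) \<le> g (real s - 1) (real s - 1)"
        using degA[OF pA] degA[OF qA] by (intro g_anti) auto
      thus ?thesis unfolding Te Bd_def using False by simp
    qed
  qed
  have "(\<Sum>e\<in>{e \<in> E. e \<subseteq> A}. T E e) \<le> real (card {e \<in> E. e \<subseteq> A}) * Bd"
    using each by (rule sum_bounded_above)
  also have "\<dots> \<le> real (s choose 2) * Bd"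
  proof -
    have sub: "{e \<in> E. e \<subseteq> A} \<subseteq> {S. S \<subseteq> A \<and> card S = 2}"
    proof
      fix e assume e: "e \<in> {e \<in> E. e \<subseteq> A}"
      then obtain p q where "e = {p, q}" "p \<noteq> q" using edge_form[OF assms(1)] by blast
      thus "e \<in> {S. S \<subseteq> A \<and> card S = 2}" using e by auto
    qed
    have "card {e \<in> E. e \<subseteq> A} \<le> card {S. S \<subseteq> A \<and> card S = 2}"
      using sub finA by (intro card_mono) auto
    also have "\<dots> = s choose 2" using n_subsets[OF finA] assms(3) by simp
    finally show ?thesis using Bd0 by (intro mult_right_mono) auto
  qed
  also have "\<dots> = side s"
  proof (cases "s = 2")
    case True thus ?thesis unfolding Bd_def side_def by simp
  next
    case False
    thus ?thesis unfolding Bd_def side_def using choose_g[OF assms(4)] by simp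
  qed
  finally show ?thesis .
qed



lemma H_props:
  assumes finV: "finite V" and cV: "card V = n" and n4: "4 \<le> n" and x: "x \<in> V" and y: "y \<in> V"
    and xy: "x \<noteq> y"
    and H: "H = {S. S \<subseteq> V - {x} \<and> card S = 2} \<union> {{x, y}}"
  shows "simple_graph V H" "edge_connectivity V H = 1"
    "real (n - 2) * sqrt (2 * real (n - 2)) / 2 + g 1 (real n - 1) \<le> abc_index H"
proof -
  define C where "C = {S. S \<subseteq> V - {x} \<and> card S = 2}"
  have HC: "H = insert {x, y} C" unfolding H C_def by blast
  have Cmem: "{p, q} \<in> C" if "p \<in> V" "q \<in> V" "p \<noteq> x" "q \<noteq> x" "p \<noteq> q" for p q
    unfolding C_def using that by auto
  have xyC: "{x, y} \<notin> C" unfolding C_def by blast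
  have Cx: "x \<notin> e" if "e \<in> C" for e using that unfolding C_def by blast
  have finC: "finite C" unfolding C_def using finV by simp
  show simple: "simple_graph V H"
    unfolding simple_graph_def
  proof (intro conjI finV subsetI)
    fix e assume e: "e \<in> H"
    show "e \<in> {e. \<exists>u v. e = {u, v} \<and> u \<noteq> v \<and> u \<in> V \<and> v \<in> V}"
    proof (cases "e = {x, y}")
      case True thus ?thesis using x y xy by blast
    next
      case False
      hence eC: "e \<in> C" using e HC by blast
      then obtain p q where "e = {p, q}" "p \<noteq> q" unfolding C_def by (auto simp: card_2_iff)
      moreover have "e \<subseteq> V" using eC unfolding C_def by blast
      ultimately show ?thesis by blast
    qed
  qed
  have finH: "finite H" using finite_E[OF simple] .
  have RH: "(p, q) \<in> Rel H" if "{p, q} \<in> H" for p q using that unfolding Rel_def by simp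
  have conn: "graph_connected V H"
    unfolding conn_iff
  proof (intro ballI)
    fix p q assume p: "p \<in> V" and q: "q \<in> V"
    have xyR: "(x, y) \<in> Rel H" using RH HC by simp
    have yxR: "(y, x) \<in> Rel H" using RH HC by (simp add: insert_commute)
    have dir: "(a, b) \<in> Rel H" if "a \<in> V" "b \<in> V" "a \<noteq> x" "b \<noteq> x" "a \<noteq> b" for a b
      using RH HC Cmem[OF that] by simp
    show "(p, q) \<in> (Rel H)\<^sup>*"
    proof (cases "p = q")
      case True thus ?thesis by simp
    next
      case pq: False
      show ?thesis
      proof (cases "p = x")
        case True
        hence qx: "q \<noteq> x" using pq by simp
        show ?thesis
        proof (cases "q = y")
          case True thus ?thesis using xyR \<open>p = x\<close> by simp
        next
          case False
          have "(y, q) \<in> Rel H" using dir[OF y q _ qx] xy False by simp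
          thus ?thesis using xyR \<open>p = x\<close> by (meson converse_rtrancl_into_rtrancl r_into_rtrancl)
        qed
      next
        case px: False
        show ?thesis
        proof (cases "q = x")
          case True
          show ?thesis
          proof (cases "p = y")
            case True thus ?thesis using yxR \<open>q = x\<close> by simp
          next
            case False
            have "(p, y) \<in> Rel H" using dir[OF p y px] xy False by simp
            thus ?thesis using yxR \<open>q = x\<close> by (meson converse_rtrancl_into_rtrancl r_into_rtrancl)
          qed
        next
          case False
          thus ?thesis using dir[OF p q px False pq] by simp
        qed
      qed
    qed
  qed
  have HmC: "H - {{x, y}} = C" using HC xyC by blast
  have nconn: "\<not> graph_connected V (H - {{x, y}})"
  proof
    assume "graph_connected V (H - {{x, y}})"
    hence r: "(x, y) \<in> (Rel C)\<^sup>*" using x y HmC unfolding conn_iff by blast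
    show False
    proof (rule converse_rtranclE[OF r])
      assume "x = y" thus False using xy by simp
    next
      fix z assume "(x, z) \<in> Rel C"
      hence "{x, z} \<in> C" unfolding Rel_def by simp
      thus False using Cx by blast
    qed
  qed
  show "edge_connectivity V H = 1"
    by (rule ec1_I[OF simple conn _ nconn]) (simp add: HC)
  have degx: "degree H x = 1"
  proof -
    have "{e \<in> H. x \<in> e} = {{x, y}}" using HC Cx by blast
    thus ?thesis unfolding degree_def by simp
  qed
  have degy: "degree H y = n - 1"
  proof -
    have "card (V - {y}) \<le> degree H y"
    proof (rule deg_lower[OF finH])
      show "finite (V - {y})" using finV by simp
      show "y \<notin> V - {y}" by simp
      fix q assume q: "q \<in> V - {y}"
      show "{y, q} \<in> H"
      proof (cases "q = x")
        case True thus ?thesis using HC by (simp add: insert_commute)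
      next
        case False thus ?thesis using HC Cmem[OF y _ _ False] q xy by auto
      qed
    qed
    moreover have "card (V - {y}) = n - 1" using cV finV y by simp
    moreover have "degree H y \<le> n - 1" using deg_upper[OF simple y] cV by simp
    ultimately show ?thesis by simp
  qed
  have degp: "real n - 2 \<le> real (degree H p) \<and> real (degree H p) \<le> real n - 1" if "p \<in> V" "p \<noteq> x" for p
  proof -
    have "card (V - {x, p}) \<le> degree H p"
    proof (rule deg_lower[OF finH])
      show "finite (V - {x, p})" using finV by simp
      show "p \<notin> V - {x, p}" by simp
      fix q assume q: "q \<in> V - {x, p}"
      thus "{p, q} \<in> H" using HC Cmem[OF that(1) _ that(2)] by auto
    qed
    moreover have "card (V - {x, p}) = n - 2" using cV finV that x by (simp add: card_Diff_subset)
    moreover have "degree H p \<le> n - 1" using deg_upper[OF simple that(1)] cV by simp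
    ultimately show ?thesis using n4 by auto
  qed
  have Tlow: "g (real n - 1) (real n - 1) \<le> T H e" if "e \<in> C" for e
  proof -
    have "card e = 2" using that unfolding C_def by simp
    then obtain p q where pq: "e = {p, q}" "p \<noteq> q" using card_2_iff[THEN iffD1] by blast
    have pV: "p \<in> V" "p \<noteq> x" "q \<in> V" "q \<noteq> x" using that pq unfolding C_def by auto
    have "T H e = g (degree H p) (degree H q)" using T_pair[OF pq(2)] pq(1) by simp
    moreover have "g (real n - 1) (real n - 1) \<le> g (degree H p) (degree H q)"
      using degp[OF pV(1,2)] degp[OF pV(3,4)] n4 by (intro g_anti) auto
    ultimately show ?thesis by simp
  qed
  have cardC: "card C = (n - 1) choose 2"
    unfolding C_def using n_subsets[of "V - {x}" 2] finV cV x by simp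
  have "real (card C) * g (real n - 1) (real n - 1) \<le> (\<Sum>e\<in>C. T H e)"
    using Tlow by (rule sum_bounded_below)
  moreover have "real (card C) * g (real n - 1) (real n - 1) = real (n - 2) * sqrt (2 * real (n - 2)) / 2"
  proof -
    have gd: "g (real n - 1) (real n - 1) = sqrt (2 * (real n - 2)) / (real n - 1)"
      using g_diag[of "real n - 1"] n4 by (simp add: algebra_simps)
    have cc: "real (card C) = (real n - 1) * (real n - 2) / 2"
      using cardC choose2_real[of "n - 1"] n4 by (simp add: of_nat_diff)
    have nr: "real (n - 2) = real n - 2" using n4 by simp
    have nz: "real n - 1 \<noteq> 0" using n4 by simp
    show ?thesis unfolding gd cc nr using nz by (simp add: field_simps)
  qed
  moreover have "T H {x, y} = g 1 (real n - 1)" using T_pair[OF xy] degx degy n4 by simp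
  moreover have "abc_index H = T H {x, y} + (\<Sum>e\<in>C. T H e)"
    unfolding abc_T HC using finC xyC by simp
  moreover have "(\<Sum>e\<in>C. T H e) = (\<Sum>e\<in>C. T H e)" ..
  ultimately show "real (n - 2) * sqrt (2 * real (n - 2)) / 2 + g 1 (real n - 1) \<le> abc_index H"
    by linarith
qed



theorem theorem4:
  fixes n :: nat and V :: "'a set" and E :: "'a set set"
  assumes "n \<ge> 2"
    and "simple_graph V E" and "card V = n" and "edge_connectivity V E = 1"
    and "\<And>(V' :: 'a set) E'. simple_graph V' E' \<Longrightarrow> card V' = n \<Longrightarrow>
            edge_connectivity V' E' = 1 \<Longrightarrow> abc_index E' \<le> abc_index E"
  shows "graph_iso V E (Kn_k_vertices n) (Kn_k_edges n 1)"
proof -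
  note simple = assms(2)
  have c2: "2 \<le> card V" using assms(1,3) by simp
  have finV: "finite V" using simple unfolding simple_graph_def by blast
  have finE: "finite E" using finite_E[OF simple] .
  have conn: "graph_connected V E" using ec1_D(1)[OF simple c2 assms(4)] .
  obtain e where eE: "e \<in> E" and ne: "\<not> graph_connected V (E - {e})"
    using ec1_D(2)[OF simple c2 assms(4)] by blast
  obtain A u v where AV: "A \<subseteq> V" and uA: "u \<in> A" and vV: "v \<in> V" and vA: "v \<notin> A"
    and euv: "e = {u, v}"
    and clos: "\<And>p q. {p, q} \<in> E - {e} \<Longrightarrow> p \<in> A \<longleftrightarrow> q \<in> A"
    and stay: "\<And>x y. x \<in> V \<Longrightarrow> y \<in> V \<Longrightarrow> (x \<in> A \<longleftrightarrow> y \<in> A) \<Longrightarrow>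
        \<not> graph_connected V (insert {x, y} E - {e})"
    using component[OF simple conn eE ne] by blast
  have uV: "u \<in> V" using uA AV by blast
  have uv: "u \<noteq> v" using uA vA by blast
  have deg1: "1 \<le> degree E w" if "w \<in> V" for w using deg_pos_conn[OF simple c2 conn that] .
  have sat: "{x, y} \<in> E" if xy: "x \<in> V" "y \<in> V" "x \<noteq> y" "x \<in> A \<longleftrightarrow> y \<in> A" for x y
  proof (rule ccontr)
    assume nin: "{x, y} \<notin> E"
    define E' where "E' = insert {x, y} E"
    have simple': "simple_graph V E'"
      using simple xy unfolding simple_graph_def E'_def by blast
    have conn': "graph_connected V E'"
    proof -
      have "(Rel E)\<^sup>* \<subseteq> (Rel E')\<^sup>*" unfolding E'_def by (rule Rel_mono) blast
      thus ?thesis using conn unfolding conn_iff by blast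
    qed
    have "edge_connectivity V E' = 1"
      by (rule ec1_I[OF simple' conn', of e]) (use eE stay[OF xy(1,2,4)] in \<open>simp_all add: E'_def\<close>)
    hence "abc_index E' \<le> abc_index E" using assms(5)[OF simple' assms(3)] by blast
    moreover have "abc_index E < abc_index E'"
      unfolding E'_def by (rule abc_add[OF simple xy(1,2,3) nin deg1[OF xy(1)] deg1[OF xy(2)]])
    ultimately show False by simp
  qed
  have struct: "{p, q} \<in> E \<longleftrightarrow> p \<noteq> q \<and> ((p \<in> A \<longleftrightarrow> q \<in> A) \<or> {p, q} = {u, v})"
    if pq: "p \<in> V" "q \<in> V" for p q
  proof
    assume pqE: "{p, q} \<in> E"
    obtain a b where ab: "{p, q} = {a, b}" "a \<noteq> b" using edge_form[OF simple pqE] by metis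
    have "p \<noteq> q"
    proof
      assume "p = q"
      hence ap: "{a, b} = {p}" using ab by simp
      have "a \<in> {p}" "b \<in> {p}" using ap by blast+
      thus False using ab(2) by simp
    qed
    moreover have "(p \<in> A \<longleftrightarrow> q \<in> A) \<or> {p, q} = {u, v}"
    proof (cases "{p, q} = e")
      case True thus ?thesis using euv by simp
    next
      case False
      hence "{p, q} \<in> E - {e}" using pqE by simp
      thus ?thesis using clos by blast
    qed
    ultimately show "p \<noteq> q \<and> ((p \<in> A \<longleftrightarrow> q \<in> A) \<or> {p, q} = {u, v})" by blast
  next
    assume h: "p \<noteq> q \<and> ((p \<in> A \<longleftrightarrow> q \<in> A) \<or> {p, q} = {u, v})"
    show "{p, q} \<in> E"
    proof (cases "p \<in> A \<longleftrightarrow> q \<in> A")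
      case True thus ?thesis using sat[OF pq] h by blast
    next
      case False
      hence "{p, q} = {u, v}" using h by blast
      thus ?thesis using eE euv by simp
    qed
  qed
  define B where "B = V - A"
  have BV: "B \<subseteq> V" unfolding B_def by blast
  have vB: "v \<in> B" unfolding B_def using vV vA by blast
  have finA: "finite A" using finV AV finite_subset by blast
  have finB: "finite B" using finV BV finite_subset by blast
  have ab_n: "card A + card B = n"
  proof -
    have "card V = card A + card B" unfolding B_def using finV AV
      by (metis card_Diff_subset card_mono diff_add_inverse le_add_diff_inverse finite_subset add.commute)
    thus ?thesis using assms(3) by simp
  qed
  have a1: "1 \<le> card A" using uA finA by (metis One_nat_def Suc_leI card_gt_0_iff empty_iff)
  have b1: "1 \<le> card B" using vB finB by (metis One_nat_def Suc_leI card_gt_0_iff empty_iff)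
  show ?thesis
  proof (cases "card A = 1")
    case True
    have Au: "A = {u}" using True uA by (metis card_1_singletonE singletonD)
    show ?thesis
    proof (rule iso_star[OF assms(3) assms(1) uV vV uv])
      fix p q assume pq: "p \<in> V" "q \<in> V"
      show "{p, q} \<in> E \<longleftrightarrow> p \<noteq> q \<and> ((p \<noteq> u \<and> q \<noteq> u) \<or> {p, q} = {u, v})"
        using struct[OF pq] Au by auto
    qed
  next
    case A2: False
    show ?thesis
    proof (cases "card B = 1")
      case True
      have Bv: "B = {v}" using True vB by (metis card_1_singletonE singletonD)
      have inA: "p \<in> A \<longleftrightarrow> p \<noteq> v" if "p \<in> V" for p
        using Bv that unfolding B_def by blast
      show ?thesis
      proof (rule iso_star[OF assms(3) assms(1) vV uV uv[symmetric]])
        fix p q assume pq: "p \<in> V" "q \<in> V"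
        have vu: "{v, u} = {u, v}" by (rule insert_commute)
        show "{p, q} \<in> E \<longleftrightarrow> p \<noteq> q \<and> ((p \<noteq> v \<and> q \<noteq> v) \<or> {p, q} = {v, u})"
          using struct[OF pq] inA[OF pq(1)] inA[OF pq(2)] unfolding vu by auto
      qed
    next
      case B2: False
      have a2: "2 \<le> card A" using a1 A2 by simp
      have b2: "2 \<le> card B" using b1 B2 by simp
      have n4: "4 \<le> n" using ab_n a2 b2 by simp
      define EA where "EA = {f \<in> E. f \<subseteq> A}"
      define EB where "EB = {f \<in> E. f \<subseteq> B}"
      have clA: "{p, q} \<in> E" if "p \<in> A" "q \<in> A" "p \<noteq> q" for p q
        using sat[of p q] that AV by blast
      have clB: "{p, q} \<in> E" if "p \<in> B" "q \<in> B" "p \<noteq> q" for p q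
        using sat[of p q] that BV unfolding B_def by blast
      have sA: "(\<Sum>f\<in>EA. T E f) \<le> side (card A)"
        unfolding EA_def by (rule side_sum[OF simple AV refl a2 clA])
      have sB: "(\<Sum>f\<in>EB. T E f) \<le> side (card B)"
        unfolding EB_def by (rule side_sum[OF simple BV refl b2 clB])
      have Edec: "E = insert e (EA \<union> EB)"
      proof
        show "insert e (EA \<union> EB) \<subseteq> E" using eE unfolding EA_def EB_def by blast
        show "E \<subseteq> insert e (EA \<union> EB)"
        proof
          fix f assume fE: "f \<in> E"
          obtain p q where pq: "f = {p, q}" "p \<noteq> q" "p \<in> V" "q \<in> V" using edge_form[OF simple fE] by metis
          show "f \<in> insert e (EA \<union> EB)"
          proof (cases "f = e")
            case True thus ?thesis by simp
          next
            case False
            hence "{p, q} \<in> E - {e}" using fE pq by simp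
            hence "p \<in> A \<longleftrightarrow> q \<in> A" by (rule clos)
            hence "f \<subseteq> A \<or> f \<subseteq> B" using pq unfolding B_def by blast
            thus ?thesis using fE unfolding EA_def EB_def by blast
          qed
        qed
      qed
      have eA: "e \<notin> EA" unfolding EA_def using euv vA by blast
      have eB: "e \<notin> EB" unfolding EB_def B_def using euv uA by blast
      have disj: "EA \<inter> EB = {}"
      proof (rule ccontr)
        assume "EA \<inter> EB \<noteq> {}"
        then obtain f where f: "f \<in> E" "f \<subseteq> A" "f \<subseteq> B" unfolding EA_def EB_def by blast
        obtain p q where "f = {p, q}" using edge_form[OF simple f(1)] by metis
        thus False using f unfolding B_def by blast
      qed
      have finEA: "finite EA" "finite EB" unfolding EA_def EB_def using finE by auto
      have abcE: "abc_index E = T E e + ((\<Sum>f\<in>EA. T E f) + (\<Sum>f\<in>EB. T E f))"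
      proof -
        have "abc_index E = (\<Sum>f\<in>insert e (EA \<union> EB). T E f)" unfolding abc_T using Edec by simp
        also have "\<dots> = T E e + (\<Sum>f\<in>EA \<union> EB. T E f)" using finEA eA eB by simp
        also have "(\<Sum>f\<in>EA \<union> EB. T E f) = (\<Sum>f\<in>EA. T E f) + (\<Sum>f\<in>EB. T E f)"
          by (rule sum.union_disjoint[OF finEA(1) finEA(2) disj])
        finally show ?thesis .
      qed
      have du: "2 \<le> degree E u"
      proof -
        have "card (insert v (A - {u})) \<le> degree E u"
        proof (rule deg_lower[OF finE])
          show "finite (insert v (A - {u}))" using finA by simp
          show "u \<notin> insert v (A - {u})" using uv by simp
          fix q assume q: "q \<in> insert v (A - {u})"
          show "{u, q} \<in> E"
          proof (cases "q = v")
            case True thus ?thesis using eE euv by simp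
          next
            case False thus ?thesis using q clA uA by blast
          qed
        qed
        moreover have "card (insert v (A - {u})) = card A" using finA vA uA a2 by simp
        ultimately show ?thesis using a2 by simp
      qed
      have dv: "2 \<le> degree E v"
      proof -
        have "card (insert u (B - {v})) \<le> degree E v"
        proof (rule deg_lower[OF finE])
          show "finite (insert u (B - {v}))" using finB by simp
          show "v \<notin> insert u (B - {v})" using uv by simp
          fix q assume q: "q \<in> insert u (B - {v})"
          show "{v, q} \<in> E"
          proof (cases "q = u")
            case True thus ?thesis using eE euv by (simp add: insert_commute)
          next
            case False thus ?thesis using q clB vB by blast
          qed
        qed
        moreover have "u \<notin> B" unfolding B_def using uA by blast
        hence "card (insert u (B - {v})) = card B" using finB vB b2 by simp
        ultimately show ?thesis using b2 by simp
      qed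
      have Te: "T E e \<le> 1 / sqrt 2"
      proof -
        have "T E e = g (degree E u) (degree E v)" using T_pair[OF uv] euv by simp
        also have "\<dots> \<le> 1 / sqrt 2" using du dv by (intro g_le_half) auto
        finally show ?thesis .
      qed
      define H where "H = {S. S \<subseteq> V - {u} \<and> card S = 2} \<union> {{u, v}}"
      have Hs: "simple_graph V H" and Hc: "edge_connectivity V H = 1"
        and Hl: "real (n - 2) * sqrt (2 * real (n - 2)) / 2 + g 1 (real n - 1) \<le> abc_index H"
        using H_props[OF finV assms(3) n4 uV vV uv H_def] by auto
      have fi: "side (card A) + side (card B) + 1 / sqrt 2 <
          real (card A + card B - 2) * sqrt (2 * real (card A + card B - 2)) / 2
          + g 1 (real (card A + card B) - 1)"
        by (rule final_ineq[OF a2 b2])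
      hence "abc_index E < abc_index H" using abcE sA sB Te Hl unfolding ab_n by linarith
      moreover have "abc_index H \<le> abc_index E" using assms(5)[OF Hs assms(3) Hc] .
      ultimately show ?thesis by simp
    qed
  qed
qed


end
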